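(* If the diagonal gain matrix $\Theta=\texttt{diag}(\theta_1,\dots,\theta_n)$ is chosen large enough that $\theta_i > \zeta_{N_{d1},i} + \lambda_{3,i}^{-1} \zeta_{N_{d2},i}$ for every $i$, then $P(t) \geq 0$ for all $t \geq t_0$.
   Context: Consider a fully actuated multirotor with configuration $q=[p;\phi]\in\mathbb{R}^n$ ($n=6$; position $p$, Euler angles $\phi$) whose dynamics are written as $M(q)\ddot q = G(q)Av + h(q,\dot q) + d(t)$, where $M(q)=\texttt{blkdiag}(mI_3,Q^\top JQ)$ is symmetric, $G(q)=\texttt{blkdiag}(R,Q^\top)$, $A\in\mathbb{R}^{6\times 6}$ is the constant invertible rotor-thrust-to-wrench map, $v$ is the shifted rotor-thrust input with symmetric bound $-\overline v\le v\le \overline v$, and $d(t)$ is an external disturbance. For a vector $x$, $\operatorname{Tanh}(x)$ denotes the vector $[\tanh(x_1);\dots;\tanh(x_n)]$ and $\operatorname{Cosh}(x)$ denotes the diagonal matrix $\texttt{diag}(\cosh(x_1),\dots,\cosh(x_n))$. With desired trajectory $q_d(t)$, error variables are $e_1=q_d-q$, $e_2=\dot e_1+\Lambda_1\operatorname{Tanh}(e_1)+e_f$, $\dot e_f=-\Gamma_1 e_2+\operatorname{Tanh}(e_1)-\Gamma_2 e_f$, and the controller is $v=\Gamma_1\operatorname{Tanh}(z)$, $\dot z=\operatorname{Cosh}^2(z)\Gamma_1^{-1}A^{-1}G^{-1}\big(M\Gamma_1\{\Lambda_2\operatorname{Tanh}(e_2)+\Lambda_3 e_2+\Gamma_2 e_2\}+\Theta\operatorname{sgn}(e_2)-\dot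 G A v\big)$, with all of $\Lambda_1,\Lambda_2,\Lambda_3,\Gamma_1,\Gamma_2,\Theta$ positive definite diagonal gain matrices ($\lambda_{3,i}$ denotes the $i$-th diagonal entry of $\Lambda_3$). Define $r=\dot e_2+\Lambda_2\operatorname{Tanh}(e_2)+\Lambda_3 e_2$, $h_d=h(q_d,\dot q_d)$, and $N_d=\dot M\ddot q_d+M\dddot q_d-\dot h_d-\dot d$. It is assumed that $\zeta_{N_{d1},i}=\sup_t|N_{d,i}(t)|$ and $\zeta_{N_{d2},i}=\sup_t|\dot N_{d,i}(t)|$ exist (are finite) for each $i$. The function $P$ is defined by $\dot P=-r^\top(N_d-\Theta\operatorname{sgn}(e_2))$ with initial value $P(t_0)=\sum_{i=1}^n\theta_i|e_{2i}(t_0)|-e_2(t_0)^\top N_d(t_0)$. *)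

theory Defs
  imports "HOL-Analysis.Analysis"
begin

definition vTanh :: "real^'n \<Rightarrow> real^'n" where
  "vTanh x = (\<chi> i. tanh (x $ i))"

definition vsgn :: "real^'n \<Rightarrow> real^'n" where
  "vsgn x = (\<chi> i. sgn (x $ i))"

text \<open>Diagonal gain matrices diag(c) applied to a vector, c = vector of diagonal entries.\<close>
definition dmul :: "real^'n \<Rightarrow> real^'n \<Rightarrow> real^'n" where
  "dmul c x = (\<chi> i. c $ i * x $ i)"

definition rise_r :: "real^'n \<Rightarrow> real^'n \<Rightarrow> (real \<Rightarrow> real^'n) \<Rightarrow> (real \<Rightarrow> real^'n) \<Rightarrow> real \<Rightarrow> real^'n" where
  "rise_r lam2 lam3 e2 de2 t = de2 t + dmul lam2 (vTanh (e2 t)) + dmul lam3 (e2 t)"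

definition rise_P :: "real^'n \<Rightarrow> real^'n \<Rightarrow> real^'n \<Rightarrow> (real \<Rightarrow> real^'n) \<Rightarrow> (real \<Rightarrow> real^'n)
    \<Rightarrow> (real \<Rightarrow> real^'n) \<Rightarrow> real \<Rightarrow> real \<Rightarrow> real" where
  "rise_P lam2 lam3 theta e2 de2 Nd t0 t =
     (\<Sum>i\<in>UNIV. theta $ i * \<bar>e2 t0 $ i\<bar>) - e2 t0 \<bullet> Nd t0
     - integral {t0..t} (\<lambda>s. rise_r lam2 lam3 e2 de2 s \<bullet> (Nd s - dmul theta (vsgn (e2 s))))"

end

theory Submission
  imports Defs
begin


lemma sgn_conv:
  fixes x :: real
  shows "(\<lambda>k. x / sqrt (x\<^sup>2 + (1 / real (Suc k))\<^sup>2)) \<longlonglongrightarrow> sgn x"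
proof (cases "x = 0")
  case True then show ?thesis by simp
next
  case False
  have e: "(\<lambda>k. 1 / real (Suc k)) \<longlonglongrightarrow> 0"
    using LIMSEQ_Suc[OF lim_inverse_n'] by simp
  have "(\<lambda>k. x / sqrt (x\<^sup>2 + (1 / real (Suc k))\<^sup>2)) \<longlonglongrightarrow> x / sqrt (x\<^sup>2 + 0\<^sup>2)"
    using False by (intro tendsto_intros e) auto
  moreover have "x / sqrt (x\<^sup>2 + 0\<^sup>2) = sgn x" using False
    by (simp add: real_sqrt_abs sgn_if)
  ultimately show ?thesis by simp
qed

lemma abs_conv:
  fixes x :: real
  shows "(\<lambda>k. sqrt (x\<^sup>2 + (1 / real (Suc k))\<^sup>2)) \<longlonglongrightarrow> \<bar>x\<bar>"
proof -
  have e: "(\<lambda>k. 1 / real (Suc k)) \<longlonglongrightarrow> 0"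
    using LIMSEQ_Suc[OF lim_inverse_n'] by simp
  have "(\<lambda>k. sqrt (x\<^sup>2 + (1 / real (Suc k))\<^sup>2)) \<longlonglongrightarrow> sqrt (x\<^sup>2 + 0\<^sup>2)"
    by (intro tendsto_intros e)
  then show ?thesis by simp
qed

lemma div_le1:
  assumes "\<bar>x\<bar> \<le> q" "0 < q" shows "\<bar>x / (q::real)\<bar> \<le> 1"
proof -
  have "\<bar>x / q\<bar> = \<bar>x\<bar> / q" using assms(2) by (simp only: abs_divide abs_of_pos)
  also have "\<dots> \<le> 1" using assms by (simp only: divide_le_eq_1_pos)
  finally show ?thesis .
qed

lemma sgn_integral:
  fixes e de :: "real \<Rightarrow> real"
  assumes ab: "a \<le> b"
    and ed: "\<And>s. s \<in> {a..b} \<Longrightarrow> (e has_real_derivative de s) (at s within {a..b})"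
    and dc: "continuous_on {a..b} de"
  shows "((\<lambda>s. sgn (e s) * de s) has_integral (\<bar>e b\<bar> - \<bar>e a\<bar>)) {a..b}"
proof -
  define g where "g = (\<lambda>k s. e s / sqrt ((e s)\<^sup>2 + (1 / real (Suc k))\<^sup>2) * de s)"
  define \<phi> where "\<phi> = (\<lambda>k s. sqrt ((e s)\<^sup>2 + (1 / real (Suc k))\<^sup>2))"
  have gi: "(g k has_integral (\<phi> k b - \<phi> k a)) {a..b}" for k
  proof (rule fundamental_theorem_of_calculus[OF ab])
    fix s assume s: "s \<in> {a..b}"
    have pos: "0 < (e s)\<^sup>2 + (1 / real (Suc k))\<^sup>2"
      by (simp add: add_nonneg_pos)
    have "((\<lambda>s. sqrt ((e s)\<^sup>2 + (1 / real (Suc k))\<^sup>2)) has_real_derivative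
        (inverse (sqrt ((e s)\<^sup>2 + (1 / real (Suc k))\<^sup>2)) / 2) * (2 * e s * de s)) (at s within {a..b})"
      apply (rule DERIV_chain2[where f=sqrt])
       apply (rule DERIV_real_sqrt[OF pos])
      using ed[OF s] by (auto intro!: derivative_eq_intros)
    moreover have "(inverse (sqrt ((e s)\<^sup>2 + (1 / real (Suc k))\<^sup>2)) / 2) * (2 * e s * de s) = g k s"
      unfolding g_def by (simp add: field_simps)
    ultimately show "(\<phi> k has_vector_derivative g k s) (at s within {a..b})"
      unfolding \<phi>_def by (simp add: has_real_derivative_iff_has_vector_derivative)
  qed
  have h: "(\<lambda>s. \<bar>de s\<bar>) integrable_on {a..b}"
    by (intro integrable_continuous_interval continuous_intros dc)
  have le: "norm (g k s) \<le> \<bar>de s\<bar>" for k s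
  proof -
    have "\<bar>e s\<bar> \<le> sqrt ((e s)\<^sup>2 + (1 / real (Suc k))\<^sup>2)"
      by (metis real_sqrt_abs real_sqrt_le_mono le_add_same_cancel1 zero_le_power2)
    moreover have "0 < sqrt ((e s)\<^sup>2 + (1 / real (Suc k))\<^sup>2)"
      by (simp add: add_nonneg_pos)
    ultimately have "\<bar>e s / sqrt ((e s)\<^sup>2 + (1 / real (Suc k))\<^sup>2)\<bar> \<le> 1"
      by (rule div_le1)
    then show ?thesis unfolding g_def real_norm_def abs_mult
      by (intro mult_left_le_one_le) auto
  qed
  have conv: "(\<lambda>k. g k s) \<longlonglongrightarrow> sgn (e s) * de s" for s
    unfolding g_def by (intro tendsto_intros sgn_conv)
  have gint: "g k integrable_on {a..b}" for k using gi by blast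
  note DC = dominated_convergence[OF gint h le conv]
  have "(\<lambda>k. integral {a..b} (g k)) \<longlonglongrightarrow> \<bar>e b\<bar> - \<bar>e a\<bar>"
    using gi unfolding integral_unique[OF gi] \<phi>_def by (intro tendsto_intros abs_conv)
  then have "integral {a..b} (\<lambda>s. sgn (e s) * de s) = \<bar>e b\<bar> - \<bar>e a\<bar>"
    using DC(2) LIMSEQ_unique by blast
  then show ?thesis using DC(1) by (metis has_integral_integral)
qed


lemma tanh_sgn: "tanh (x::real) * sgn x = \<bar>tanh x\<bar>"
  by (cases "x > 0"; cases "x < 0") (auto simp: sgn_if abs_if)

lemma comp_bound:
  fixes e de N dN :: "real \<Rightarrow> real"
  assumes ab: "a \<le> b"
    and ed: "\<And>s. s \<in> {a..b} \<Longrightarrow> (e has_real_derivative de s) (at s within {a..b})"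
    and dc: "continuous_on {a..b} de"
    and Nd: "\<And>s. (N has_real_derivative dN s) (at s)"
    and dNc: "continuous_on UNIV dN"
    and l2: "l2 > 0" and l3: "l3 > 0"
    and BN: "\<And>s. \<bar>N s\<bar> \<le> BN" and BdN: "\<And>s. \<bar>dN s\<bar> \<le> BdN"
    and th: "\<theta> > BN + BdN / l3"
  shows "\<exists>J. ((\<lambda>s. (de s + l2 * tanh (e s) + l3 * e s) * (N s - \<theta> * sgn (e s))) has_integral J) {a..b}
              \<and> J \<le> \<theta> * \<bar>e a\<bar> - e a * N a"
proof -
  have ec: "continuous_on {a..b} e" by (rule DERIV_continuous_on[OF ed])
  have Nc: "continuous_on {a..b} N"
    by (rule DERIV_continuous_on[where D=dN]) (use Nd has_field_derivative_at_within in blast)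
  have dNc': "continuous_on {a..b} dN" using dNc continuous_on_subset by blast
  define C where "C = (\<lambda>s. de s * N s + (l2 * tanh (e s) + l3 * e s) * N s
      - \<theta> * (l2 * \<bar>tanh (e s)\<bar> + l3 * \<bar>e s\<bar>))"
  define A where "A = (\<lambda>s. de s * N s + e s * dN s)"
  have Cc: "continuous_on {a..b} C" unfolding C_def
    by (intro continuous_intros ec Nc dc) simp_all
  have Ci: "C integrable_on {a..b}" by (rule integrable_continuous_interval[OF Cc])
  have Ai: "(A has_integral (e b * N b - e a * N a)) {a..b}"
  proof (rule fundamental_theorem_of_calculus[OF ab])
    fix s assume s: "s \<in> {a..b}"
    have "((\<lambda>s. e s * N s) has_real_derivative (de s * N s + e s * dN s)) (at s within {a..b})"
      using ed[OF s] has_field_derivative_at_within[OF Nd[of s]]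
      by (auto intro!: derivative_eq_intros)
    then show "((\<lambda>s. e s * N s) has_vector_derivative A s) (at s within {a..b})"
      unfolding A_def by (simp add: has_real_derivative_iff_has_vector_derivative)
  qed
  have BN0: "BN \<ge> 0" using BN[of 0] by linarith
  have BdN0: "BdN \<ge> 0" using BdN[of 0] by linarith
  have thl3: "\<theta> * l3 > BN * l3 + BdN"
  proof -
    have "(BN + BdN / l3) * l3 < \<theta> * l3" using th l3 by (intro mult_strict_right_mono) auto
    moreover have "(BN + BdN / l3) * l3 = BN * l3 + BdN" using l3 by (simp add: field_simps)
    ultimately show ?thesis by linarith
  qed
  have thBN: "\<theta> > BN" using th BdN0 l3 by (smt (verit) divide_nonneg_pos)
  have CA: "C s \<le> A s" for s
  proof -
    have t1: "tanh (e s) * N s \<le> \<bar>tanh (e s)\<bar> * \<theta>"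
    proof -
      have "tanh (e s) * N s \<le> \<bar>tanh (e s)\<bar> * \<bar>N s\<bar>" by (metis abs_ge_self abs_mult)
      also have "\<dots> \<le> \<bar>tanh (e s)\<bar> * \<theta>"
        using BN[of s] thBN by (intro mult_left_mono) auto
      finally show ?thesis .
    qed
    have t2: "e s * N s \<le> \<bar>e s\<bar> * BN"
    proof -
      have "e s * N s \<le> \<bar>e s\<bar> * \<bar>N s\<bar>" by (metis abs_ge_self abs_mult)
      also have "\<dots> \<le> \<bar>e s\<bar> * BN" using BN[of s] by (intro mult_left_mono) auto
      finally show ?thesis .
    qed
    have t3: "- (e s * dN s) \<le> \<bar>e s\<bar> * BdN"
    proof -
      have "- (e s * dN s) \<le> \<bar>e s\<bar> * \<bar>dN s\<bar>" by (metis abs_ge_self abs_minus_cancel abs_mult)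
      also have "\<dots> \<le> \<bar>e s\<bar> * BdN" using BdN[of s] by (intro mult_left_mono) auto
      finally show ?thesis .
    qed
    have t4: "\<bar>e s\<bar> * (BN * l3 + BdN) \<le> \<bar>e s\<bar> * (\<theta> * l3)"
      using thl3 by (intro mult_left_mono) auto
    have t1': "l2 * (tanh (e s) * N s) \<le> l2 * (\<bar>tanh (e s)\<bar> * \<theta>)"
      using t1 l2 by (intro mult_left_mono) auto
    have t2': "l3 * (e s * N s) \<le> l3 * (\<bar>e s\<bar> * BN)"
      using t2 l3 by (intro mult_left_mono) auto
    show ?thesis unfolding C_def A_def
      using t1' t2' t3 t4 by (simp add: algebra_simps)
  qed
  have intCA: "integral {a..b} C \<le> e b * N b - e a * N a"
    using integral_le[OF Ci has_integral_integrable[OF Ai]] CA integral_unique[OF Ai] by auto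
  have Si: "((\<lambda>s. sgn (e s) * de s) has_integral (\<bar>e b\<bar> - \<bar>e a\<bar>)) {a..b}"
    by (rule sgn_integral[OF ab ed dc])
  have fi: "((\<lambda>s. C s - \<theta> * (sgn (e s) * de s)) has_integral
       (integral {a..b} C - \<theta> * (\<bar>e b\<bar> - \<bar>e a\<bar>))) {a..b}"
    by (intro has_integral_diff has_integral_mult_right Si integrable_integral Ci)
  have feq: "C s - \<theta> * (sgn (e s) * de s) =
      (de s + l2 * tanh (e s) + l3 * e s) * (N s - \<theta> * sgn (e s))" for s
  proof -
    have "tanh (e s) * sgn (e s) = \<bar>tanh (e s)\<bar>" by (rule tanh_sgn)
    moreover have "e s * sgn (e s) = \<bar>e s\<bar>" by (cases "e s > 0"; cases "e s < 0") (auto simp: sgn_if)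
    ultimately show ?thesis unfolding C_def by (simp add: algebra_simps)
  qed
  have ebN: "e b * N b \<le> \<theta> * \<bar>e b\<bar>"
  proof -
    have "e b * N b \<le> \<bar>e b\<bar> * \<bar>N b\<bar>" by (metis abs_ge_self abs_mult)
    also have "\<dots> \<le> \<bar>e b\<bar> * \<theta>" using BN[of b] thBN by (intro mult_left_mono) auto
    finally show ?thesis by (simp add: mult.commute)
  qed
  have fi': "((\<lambda>s. (de s + l2 * tanh (e s) + l3 * e s) * (N s - \<theta> * sgn (e s))) has_integral
       (integral {a..b} C - \<theta> * (\<bar>e b\<bar> - \<bar>e a\<bar>))) {a..b}"
    using fi unfolding feq .
  have "integral {a..b} C - \<theta> * (\<bar>e b\<bar> - \<bar>e a\<bar>) \<le> \<theta> * \<bar>e a\<bar> - e a * N a"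
    using intCA ebN by (simp add: algebra_simps)
  with fi' show ?thesis by blast
qed


theorem lemma1:
  fixes e2 de2 Nd dNd :: "real \<Rightarrow> real^'n"
    and lam2 lam3 theta :: "real^'n"
    and t0 :: real
  assumes dim: "CARD('n) = 6"
    and gains_pos: "\<forall>i. lam2 $ i > 0 \<and> lam3 $ i > 0 \<and> theta $ i > 0"
    and e2_deriv: "\<forall>t\<ge>t0. (e2 has_vector_derivative de2 t) (at t within {t0..})"
    and de2_cont: "continuous_on {t0..} de2"
    and Nd_deriv: "\<forall>t. (Nd has_vector_derivative dNd t) (at t)"
    and dNd_cont: "continuous_on UNIV dNd"
    and Nd_bdd: "\<forall>i. bdd_above (range (\<lambda>t. \<bar>Nd t $ i\<bar>))"
    and dNd_bdd: "\<forall>i. bdd_above (range (\<lambda>t. \<bar>dNd t $ i\<bar>))"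
    and theta_big: "\<forall>i. theta $ i > (SUP t. \<bar>Nd t $ i\<bar>) + (SUP t. \<bar>dNd t $ i\<bar>) / lam3 $ i"
  shows "\<forall>t\<ge>t0. rise_P lam2 lam3 theta e2 de2 Nd t0 t \<ge> 0"
proof (intro allI impI)
  fix t assume tt: "t0 \<le> t"
  have comp: "\<exists>J. ((\<lambda>s. (de2 s $ i + lam2 $ i * tanh (e2 s $ i) + lam3 $ i * e2 s $ i)
        * (Nd s $ i - theta $ i * sgn (e2 s $ i))) has_integral J) {t0..t}
        \<and> J \<le> theta $ i * \<bar>e2 t0 $ i\<bar> - e2 t0 $ i * Nd t0 $ i" for i
  proof (rule comp_bound[OF tt])
    fix s assume s: "s \<in> {t0..t}"
    have "(e2 has_vector_derivative de2 s) (at s within {t0..})" using e2_deriv s by auto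
    then have "(e2 has_vector_derivative de2 s) (at s within {t0..t})"
      by (rule has_vector_derivative_within_subset) auto
    from bounded_linear.has_vector_derivative[OF bounded_linear_vec_nth this, of i]
    show "((\<lambda>s. e2 s $ i) has_real_derivative de2 s $ i) (at s within {t0..t})"
      by (simp add: has_real_derivative_iff_has_vector_derivative)
  next
    show "continuous_on {t0..t} (\<lambda>s. de2 s $ i)"
      by (intro continuous_on_component continuous_on_subset[OF de2_cont]) auto
  next
    fix s
    from bounded_linear.has_vector_derivative[OF bounded_linear_vec_nth Nd_deriv[rule_format, of s], of i]
    show "((\<lambda>s. Nd s $ i) has_real_derivative dNd s $ i) (at s)"
      by (simp add: has_real_derivative_iff_has_vector_derivative)
  next
    show "continuous_on UNIV (\<lambda>s. dNd s $ i)"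
      by (intro continuous_on_component dNd_cont)
  next
    show "0 < lam2 $ i" "0 < lam3 $ i" using gains_pos by auto
  next
    fix s show "\<bar>Nd s $ i\<bar> \<le> (SUP t. \<bar>Nd t $ i\<bar>)"
      by (rule cSUP_upper[OF UNIV_I Nd_bdd[rule_format]])
  next
    fix s show "\<bar>dNd s $ i\<bar> \<le> (SUP t. \<bar>dNd t $ i\<bar>)"
      by (rule cSUP_upper[OF UNIV_I dNd_bdd[rule_format]])
  next
    show "(SUP t. \<bar>Nd t $ i\<bar>) + (SUP t. \<bar>dNd t $ i\<bar>) / lam3 $ i < theta $ i"
      using theta_big by auto
  qed
  have "\<exists>J. \<forall>i. ((\<lambda>s. (de2 s $ i + lam2 $ i * tanh (e2 s $ i) + lam3 $ i * e2 s $ i)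
        * (Nd s $ i - theta $ i * sgn (e2 s $ i))) has_integral J i) {t0..t}
        \<and> J i \<le> theta $ i * \<bar>e2 t0 $ i\<bar> - e2 t0 $ i * Nd t0 $ i"
    by (intro choice allI comp)
  then obtain J where J0: "\<forall>i. ((\<lambda>s. (de2 s $ i + lam2 $ i * tanh (e2 s $ i) + lam3 $ i * e2 s $ i)
        * (Nd s $ i - theta $ i * sgn (e2 s $ i))) has_integral J i) {t0..t}
        \<and> J i \<le> theta $ i * \<bar>e2 t0 $ i\<bar> - e2 t0 $ i * Nd t0 $ i"
    by (elim exE)
  note J = J0[rule_format, THEN conjunct1] J0[rule_format, THEN conjunct2]
  have eq: "(\<lambda>s. rise_r lam2 lam3 e2 de2 s \<bullet> (Nd s - dmul theta (vsgn (e2 s)))) =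
      (\<lambda>s. \<Sum>i\<in>UNIV. (de2 s $ i + lam2 $ i * tanh (e2 s $ i) + lam3 $ i * e2 s $ i)
        * (Nd s $ i - theta $ i * sgn (e2 s $ i)))"
  proof
    fix s
    have c1: "rise_r lam2 lam3 e2 de2 s $ i = de2 s $ i + lam2 $ i * tanh (e2 s $ i) + lam3 $ i * e2 s $ i" for i
      unfolding rise_r_def dmul_def vTanh_def by simp
    have c2: "(Nd s - dmul theta (vsgn (e2 s))) $ i = Nd s $ i - theta $ i * sgn (e2 s $ i)" for i
      unfolding dmul_def vsgn_def by simp
    show "rise_r lam2 lam3 e2 de2 s \<bullet> (Nd s - dmul theta (vsgn (e2 s))) =
      (\<Sum>i\<in>UNIV. (de2 s $ i + lam2 $ i * tanh (e2 s $ i) + lam3 $ i * e2 s $ i)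
        * (Nd s $ i - theta $ i * sgn (e2 s $ i)))"
      unfolding inner_vec_def inner_real_def c1 c2 ..
  qed
  have HI: "((\<lambda>s. rise_r lam2 lam3 e2 de2 s \<bullet> (Nd s - dmul theta (vsgn (e2 s)))) has_integral
      (\<Sum>i\<in>UNIV. J i)) {t0..t}"
    unfolding eq by (intro has_integral_sum J(1)) simp
  have "(\<Sum>i\<in>UNIV. J i) \<le> (\<Sum>i\<in>UNIV. theta $ i * \<bar>e2 t0 $ i\<bar> - e2 t0 $ i * Nd t0 $ i)"
    by (intro sum_mono J(2))
  also have "\<dots> = (\<Sum>i\<in>UNIV. theta $ i * \<bar>e2 t0 $ i\<bar>) - e2 t0 \<bullet> Nd t0"
    by (simp add: inner_vec_def sum_subtractf)
  finally show "rise_P lam2 lam3 theta e2 de2 Nd t0 t \<ge> 0"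
    unfolding rise_P_def integral_unique[OF HI] by simp
qed

end
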